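(* For $1\le p<\infty$, let $\ell_p$ be the real space of sequences $x=(x_i)$ with $\|x\|_p=(\sum_i|x_i|^p)^{1/p}<\infty$. Then $S_P(\ell_p)\ge 1-2^{-\left|\frac{2}{p}-1\right|}$.
   Context: For a real Banach space $X$ with unit sphere $S_X$, the P-angle constant is $S_P(X)=\sup\left\{\frac{\|x+y\|^2+\|x-y\|^2-4}{2\|x+y\|\,\|x-y\|}: x,y\in S_X,\ x\neq \pm y\right\}$ (this is the supremum of $\cos\operatorname{ang}_P(x+y,x-y)$, where $\operatorname{ang}_P(u,v)=\arccos\frac{\|u\|^2+\|v\|^2-\|u-v\|^2}{2\|u\|\|v\|}$). *)

theory Defs
  imports Complex_Main
begin

definition lp_space :: "real \<Rightarrow> (nat \<Rightarrow> real) set" where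
  "lp_space p = {x. summable (\<lambda>i. \<bar>x i\<bar> powr p)}"

definition lp_norm :: "real \<Rightarrow> (nat \<Rightarrow> real) \<Rightarrow> real" where
  "lp_norm p x = (\<Sum>i. \<bar>x i\<bar> powr p) powr (1 / p)"

definition SP_lp :: "real \<Rightarrow> real" where
  "SP_lp p = Sup { ((lp_norm p (\<lambda>i. x i + y i))\<^sup>2 + (lp_norm p (\<lambda>i. x i - y i))\<^sup>2 - 4)
                   / (2 * lp_norm p (\<lambda>i. x i + y i) * lp_norm p (\<lambda>i. x i - y i))
                 | x y. x \<in> lp_space p \<and> y \<in> lp_space p \<and> lp_norm p x = 1 \<and> lp_norm p y = 1
                        \<and> x \<noteq> y \<and> x \<noteq> (\<lambda>i. - y i) }"

end

theory Submission
  imports Defs "HOL-Analysis.Analysis"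
begin

lemma pw1: "0 \<le> (x::real) \<Longrightarrow> x \<le> 1 \<Longrightarrow> 1 \<le> p \<Longrightarrow> x powr p \<le> x"
  by (metis powr_one powr_mono')

lemma conv_nonneg:
  fixes p l s1 t1 :: real
  assumes p: "1 \<le> p" and l: "0 \<le> l" "l \<le> 1" and st: "0 \<le> s1" "0 \<le> t1"
  shows "(l* s1 + (1-l)*t1) powr p \<le> l * s1 powr p + (1-l) * t1 powr p"
proof (cases "s1 = 0")
  case True
  have "((1-l)*t1) powr p = (1-l) powr p * t1 powr p" using l st by (simp add: powr_mult)
  also have "\<dots> \<le> (1-l) * t1 powr p" using pw1[of "1-l" p] l p by (intro mult_right_mono) auto
  finally show ?thesis using True p by simp
next
  case s0: False
  show ?thesis
  proof (cases "t1 = 0")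
    case True
    have "(l* s1) powr p = l powr p * s1 powr p" using l st by (simp add: powr_mult)
    also have "\<dots> \<le> l * s1 powr p" using pw1[of "l" p] l p by (intro mult_right_mono) auto
    finally show ?thesis using True p by simp
  next
    case False
    have "convex_on {0<..} (\<lambda>x::real. x powr p)" using powr_convex p by blast
    from convex_onD[OF this, of l t1 s1] s0 False st l
    show ?thesis by (simp add: algebra_simps)
  qed
qed

lemma conv_abs:
  fixes p l s1 t1 :: real
  assumes p: "1 \<le> p" and l: "0 \<le> l" "l \<le> 1"
  shows "\<bar>l* s1 + (1-l)*t1\<bar> powr p \<le> l * \<bar>s1\<bar> powr p + (1-l) * \<bar>t1\<bar> powr p"
proof -
  have "\<bar>l* s1 + (1-l)*t1\<bar> \<le> l*\<bar>s1\<bar> + (1-l)*\<bar>t1\<bar>"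
    using l by (metis abs_mult abs_of_nonneg abs_triangle_ineq diff_ge_0_iff_ge)
  then have "\<bar>l* s1 + (1-l)*t1\<bar> powr p \<le> (l*\<bar>s1\<bar> + (1-l)*\<bar>t1\<bar>) powr p"
    using p by (intro powr_mono2) auto
  also have "\<dots> \<le> l * \<bar>s1\<bar> powr p + (1-l) * \<bar>t1\<bar> powr p"
    using conv_nonneg[OF p l] by auto
  finally show ?thesis .
qed

lemma lp_norm_nonneg: "0 \<le> lp_norm p x"
  unfolding lp_norm_def by simp

lemma zero_case:
  fixes u :: "nat \<Rightarrow> real"
  assumes p: "1 \<le> p" and su: "summable (\<lambda>i. \<bar>u i\<bar> powr p)"
    and A: "(\<Sum>i. \<bar>u i\<bar> powr p) = 0"
  shows "\<And>i. u i = 0"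
proof -
  fix i
  have "\<forall>n. \<bar>u n\<bar> powr p = 0" using suminf_eq_zero_iff[of "\<lambda>i. \<bar>u i\<bar> powr p"] su A by simp
  then show "u i = 0" by simp
qed

lemma mink:
  fixes p :: real and u v :: "nat \<Rightarrow> real"
  assumes p: "1 \<le> p" and su: "summable (\<lambda>i. \<bar>u i\<bar> powr p)" and sv: "summable (\<lambda>i. \<bar>v i\<bar> powr p)"
  shows "summable (\<lambda>i. \<bar>u i + v i\<bar> powr p) \<and> lp_norm p (\<lambda>i. u i + v i) \<le> lp_norm p u + lp_norm p v"
proof -
  define A where "A = (\<Sum>i. \<bar>u i\<bar> powr p)"
  define B where "B = (\<Sum>i. \<bar>v i\<bar> powr p)"
  have A0: "A \<ge> 0" unfolding A_def by (intro suminf_nonneg su) simp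
  have B0: "B \<ge> 0" unfolding B_def by (intro suminf_nonneg sv) simp
  show ?thesis
  proof (cases "A = 0")
    case True
    then have "\<And>i. u i = 0" using zero_case[OF p su] unfolding A_def by blast
    then show ?thesis using sv lp_norm_nonneg[of p u] by simp
  next
    case An: False
    show ?thesis
    proof (cases "B = 0")
      case True
      then have "\<And>i. v i = 0" using zero_case[OF p sv] unfolding B_def by blast
      then show ?thesis using su lp_norm_nonneg[of p v] by simp
    next
      case Bn: False
      have Ap: "A > 0" using A0 An by simp
      have Bp: "B > 0" using B0 Bn by simp
      define a where "a = A powr (1/p)"
      define b where "b = B powr (1/p)"
      have ap: "a > 0" using Ap a_def by simp
      have bp: "b > 0" using Bp b_def by simp
      have aA: "a powr p = A" using Ap p unfolding a_def by (simp add: powr_powr)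
      have bB: "b powr p = B" using Bp p unfolding b_def by (simp add: powr_powr)
      define l where "l = a / (a+b)"
      have l0: "0 \<le> l" "l \<le> 1" using ap bp unfolding l_def by auto
      have oml: "1 - l = b / (a+b)" using ap bp unfolding l_def by (simp add: field_simps)
      define g where "g i = (a+b) powr p * (l / A * \<bar>u i\<bar> powr p + (1-l) / B * \<bar>v i\<bar> powr p)" for i
      have fg: "\<bar>u i + v i\<bar> powr p \<le> g i" for i
      proof -
        have eq: "u i + v i = (a+b) * (l * (u i/a) + (1-l)*(v i/b))"
        proof -
          have "(a+b) * (l * (u i/a)) = u i" using ap bp unfolding l_def by simp
          moreover have "(a+b) * ((1-l)*(v i/b)) = v i" using ap bp unfolding oml by simp
          ultimately show ?thesis by (simp add: distrib_left)
        qed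
        have "\<bar>u i + v i\<bar> powr p = (a+b) powr p * \<bar>l * (u i/a) + (1-l)*(v i/b)\<bar> powr p"
          using ap bp by (subst eq) (simp add: abs_mult powr_mult)
        also have "\<dots> \<le> (a+b) powr p * (l * \<bar>u i/a\<bar> powr p + (1-l) * \<bar>v i/b\<bar> powr p)"
          by (intro mult_left_mono conv_abs p l0) simp
        also have "\<bar>u i/a\<bar> powr p = \<bar>u i\<bar> powr p / A"
          using ap aA by (simp add: powr_divide)
        also have "\<bar>v i/b\<bar> powr p = \<bar>v i\<bar> powr p / B"
          using bp bB by (simp add: powr_divide)
        finally show ?thesis unfolding g_def by simp
      qed
      have sg: "(\<lambda>i. g i) sums ((a+b) powr p * (l / A * A + (1-l) / B * B))"
        unfolding g_def
        by (intro sums_mult sums_add) (use su sv in \<open>auto simp: A_def B_def intro!: summable_sums\<close>)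
      have gsum: "(l / A * A + (1-l) / B * B) = 1" using Ap Bp by simp
      have sg': "g sums ((a+b) powr p)" using sg gsum by simp
      have sf: "summable (\<lambda>i. \<bar>u i + v i\<bar> powr p)"
        by (rule summable_comparison_test'[of g 0]) (use fg sg' sums_summable in auto)
      have "(\<Sum>i. \<bar>u i + v i\<bar> powr p) \<le> (a+b) powr p"
        using suminf_le[OF fg sf sums_summable[OF sg']] sums_unique[OF sg'] by simp
      then have "lp_norm p (\<lambda>i. u i + v i) \<le> ((a+b) powr p) powr (1/p)"
        unfolding lp_norm_def using p by (intro powr_mono2) (auto intro: suminf_nonneg sf)
      also have "\<dots> = a + b" using ap bp p by (simp add: powr_powr)
      finally show ?thesis using sf unfolding a_def b_def A_def B_def lp_norm_def by simp
    qed
  qed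
qed

lemma scale:
  fixes y :: "nat \<Rightarrow> real"
  assumes p: "1 \<le> p" and sy: "summable (\<lambda>i. \<bar>y i\<bar> powr p)"
  shows "summable (\<lambda>i. \<bar>c * y i\<bar> powr p) \<and> lp_norm p (\<lambda>i. c * y i) = \<bar>c\<bar> * lp_norm p y"
proof -
  have eq: "(\<lambda>i. \<bar>c * y i\<bar> powr p) = (\<lambda>i. \<bar>c\<bar> powr p * \<bar>y i\<bar> powr p)"
    by (simp add: abs_mult powr_mult)
  have S0: "(\<Sum>i. \<bar>y i\<bar> powr p) \<ge> 0" by (intro suminf_nonneg sy) simp
  have "lp_norm p (\<lambda>i. c * y i) = (\<bar>c\<bar> powr p * (\<Sum>i. \<bar>y i\<bar> powr p)) powr (1/p)"
    unfolding lp_norm_def eq using suminf_mult[OF sy] by simp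
  also have "\<dots> = (\<bar>c\<bar> powr p) powr (1/p) * (\<Sum>i. \<bar>y i\<bar> powr p) powr (1/p)"
    using S0 by (simp add: powr_mult)
  also have "(\<bar>c\<bar> powr p) powr (1/p) = \<bar>c\<bar>" using p by (simp add: powr_powr)
  finally show ?thesis unfolding eq lp_norm_def using summable_mult[OF sy] by simp
qed

definition SPset :: "real \<Rightarrow> real set" where
  "SPset p = { ((lp_norm p (\<lambda>i. x i + y i))\<^sup>2 + (lp_norm p (\<lambda>i. x i - y i))\<^sup>2 - 4)
                   / (2 * lp_norm p (\<lambda>i. x i + y i) * lp_norm p (\<lambda>i. x i - y i))
                 | x y. x \<in> lp_space p \<and> y \<in> lp_space p \<and> lp_norm p x = 1 \<and> lp_norm p y = 1
                        \<and> x \<noteq> y \<and> x \<noteq> (\<lambda>i. - y i) }"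

lemma SP_eq: "SP_lp p = Sup (SPset p)" unfolding SP_lp_def SPset_def by simp

lemma quot_le1:
  fixes a b :: real
  assumes "0 \<le> a" "0 \<le> b" "a \<le> b + 2" "b \<le> a + 2"
  shows "(a\<^sup>2 + b\<^sup>2 - 4) / (2 * a * b) \<le> 1"
proof (cases "a * b = 0")
  case True then show ?thesis by auto
next
  case False
  then have ab: "2 * a * b > 0" using assms by (simp add: less_le)
  have "\<bar>a - b\<bar> \<le> 2" using assms by simp
  then have "\<bar>a - b\<bar>\<^sup>2 \<le> 2\<^sup>2" by (intro power_mono) auto
  then have "(a - b)\<^sup>2 \<le> 4" by simp
  then have "a\<^sup>2 + b\<^sup>2 - 4 \<le> 2 * a * b" by (simp add: power2_diff)
  then show ?thesis using ab by (simp add: divide_le_eq_1)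
qed

lemma bdd:
  assumes p: "1 \<le> p"
  shows "bdd_above (SPset p)"
proof (rule bdd_aboveI[of _ 1])
  fix z assume "z \<in> SPset p"
  then obtain x y where z: "z = ((lp_norm p (\<lambda>i. x i + y i))\<^sup>2 + (lp_norm p (\<lambda>i. x i - y i))\<^sup>2 - 4)
                   / (2 * lp_norm p (\<lambda>i. x i + y i) * lp_norm p (\<lambda>i. x i - y i))"
    and xy: "x \<in> lp_space p" "y \<in> lp_space p" "lp_norm p x = 1" "lp_norm p y = 1"
    unfolding SPset_def by blast
  have sx: "summable (\<lambda>i. \<bar>x i\<bar> powr p)" and sy: "summable (\<lambda>i. \<bar>y i\<bar> powr p)"
    using xy unfolding lp_space_def by auto
  have smy: "summable (\<lambda>i. \<bar>- y i\<bar> powr p)" using sy by simp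
  have sp: "summable (\<lambda>i. \<bar>x i + y i\<bar> powr p)" using mink[OF p sx sy] by blast
  have sm: "summable (\<lambda>i. \<bar>x i - y i\<bar> powr p)" using mink[OF p sx smy] by simp
  have s2: "summable (\<lambda>i. \<bar>2 * y i\<bar> powr p)" "lp_norm p (\<lambda>i. 2 * y i) = 2"
    using scale[OF p sy, of 2] xy by auto
  have s2': "summable (\<lambda>i. \<bar>(-2) * y i\<bar> powr p)" "lp_norm p (\<lambda>i. (-2) * y i) = 2"
    using scale[OF p sy, of "-2"] xy by auto
  have e1: "(\<lambda>i. (x i - y i) + 2 * y i) = (\<lambda>i. x i + y i)" by (rule ext) simp
  have e2: "(\<lambda>i. (x i + y i) + (-2) * y i) = (\<lambda>i. x i - y i)" by (rule ext) simp
  have "lp_norm p (\<lambda>i. x i + y i) \<le> lp_norm p (\<lambda>i. x i - y i) + 2"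
    using mink[OF p sm s2(1)] s2(2) unfolding e1 by simp
  moreover have "lp_norm p (\<lambda>i. x i - y i) \<le> lp_norm p (\<lambda>i. x i + y i) + 2"
    using mink[OF p sp s2'(1)] s2'(2) unfolding e2 by simp
  ultimately show "z \<le> 1" unfolding z by (intro quot_le1 lp_norm_nonneg)
qed

lemma le_SP:
  assumes p: "1 \<le> p" and "v \<in> SPset p" and "t \<le> v"
  shows "t \<le> SP_lp p"
  unfolding SP_eq using assms cSup_upper[OF _ bdd[OF p]] by (meson order_trans)

lemma fin2:
  fixes f :: "nat \<Rightarrow> real"
  assumes "\<And>i. i \<ge> 2 \<Longrightarrow> f i = 0"
  shows "summable f \<and> suminf f = f 0 + f 1"
proof -
  have N: "\<And>n. n \<notin> {0,1} \<Longrightarrow> f n = 0" using assms by auto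
  show ?thesis using summable_finite[of "{0,1}" f] suminf_finite[of "{0,1}" f] N by simp
qed

lemma val_eq:
  fixes q e :: real
  assumes "q > 0" "q\<^sup>2 = 2 powr e"
  shows "(q\<^sup>2 + q\<^sup>2 - 4) / (2 * q * q) = 1 - 2 powr (1 - e)"
proof -
  have "(q\<^sup>2 + q\<^sup>2 - 4) / (2 * q * q) = 1 - 2 / q\<^sup>2"
    using assms(1) by (simp add: field_simps power2_eq_square)
  also have "2 / q\<^sup>2 = 2 powr (1 - e)" using assms(2) by (simp add: powr_diff)
  finally show ?thesis .
qed

lemma case1:
  assumes p: "1 \<le> p"
  shows "1 - 2 powr (1 - 2/p) \<le> SP_lp p"
proof -
  define x :: "nat \<Rightarrow> real" where "x = (\<lambda>i. if i = 0 then 1 else 0)"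
  define y :: "nat \<Rightarrow> real" where "y = (\<lambda>i. if i = 1 then 1 else 0)"
  have p0: "p \<noteq> 0" using p by simp
  have fx: "summable (\<lambda>i. \<bar>x i\<bar> powr p) \<and> (\<Sum>i. \<bar>x i\<bar> powr p) = 1"
    using fin2[of "\<lambda>i. \<bar>x i\<bar> powr p"] p0 unfolding x_def by simp
  have fy: "summable (\<lambda>i. \<bar>y i\<bar> powr p) \<and> (\<Sum>i. \<bar>y i\<bar> powr p) = 1"
    using fin2[of "\<lambda>i. \<bar>y i\<bar> powr p"] p0 unfolding y_def by simp
  have fp: "(\<Sum>i. \<bar>x i + y i\<bar> powr p) = 2"
    using fin2[of "\<lambda>i. \<bar>x i + y i\<bar> powr p"] p0 unfolding x_def y_def by simp
  have fm: "(\<Sum>i. \<bar>x i - y i\<bar> powr p) = 2"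
    using fin2[of "\<lambda>i. \<bar>x i - y i\<bar> powr p"] p0 unfolding x_def y_def by simp
  define q where "q = (2::real) powr (1/p)"
  have q0: "q > 0" unfolding q_def by simp
  have q2: "q\<^sup>2 = 2 powr (2/p)" unfolding q_def
    by (simp add: power2_eq_square powr_add[symmetric])
  have mem: "(q\<^sup>2 + q\<^sup>2 - 4) / (2 * q * q) \<in> SPset p"
  proof -
    have "x 0 \<noteq> y 0" unfolding x_def y_def by simp
    then have "x \<noteq> y" by metis
    moreover have "x 0 \<noteq> - y 0" unfolding x_def y_def by simp
    then have "x \<noteq> (\<lambda>i. - y i)" by metis
    moreover have "lp_norm p x = 1" "lp_norm p y = 1" using fx fy unfolding lp_norm_def by auto
    moreover have "x \<in> lp_space p" "y \<in> lp_space p" using fx fy unfolding lp_space_def by auto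
    moreover have "lp_norm p (\<lambda>i. x i + y i) = q" "lp_norm p (\<lambda>i. x i - y i) = q"
      unfolding lp_norm_def fp fm q_def by auto
    ultimately show ?thesis unfolding SPset_def
      by (intro CollectI exI[of _ x] exI[of _ y]) simp
  qed
  show ?thesis using le_SP[OF p mem] val_eq[OF q0 q2] by simp
qed

lemma case2:
  assumes p: "1 \<le> p"
  shows "1 - 2 powr (2/p - 1) \<le> SP_lp p"
proof -
  define c :: real where "c = 2 powr (- 1/p)"
  have c0: "c > 0" unfolding c_def by simp
  have cp: "c powr p = 1/2"
  proof -
    have "c powr p = 2 powr (- 1/p * p)" unfolding c_def by (rule powr_powr)
    also have "- 1/p * p = -1" using p by simp
    also have "(2::real) powr (-1) = 1/2" by (simp add: powr_minus)
    finally show ?thesis .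
  qed
  define x :: "nat \<Rightarrow> real" where "x = (\<lambda>i. if i \<le> 1 then c else 0)"
  define y :: "nat \<Rightarrow> real" where "y = (\<lambda>i. if i = 0 then c else if i = 1 then - c else 0)"
  have p0: "p \<noteq> 0" using p by simp
  have fx: "summable (\<lambda>i. \<bar>x i\<bar> powr p) \<and> (\<Sum>i. \<bar>x i\<bar> powr p) = 1"
    using fin2[of "\<lambda>i. \<bar>x i\<bar> powr p"] p0 c0 cp unfolding x_def by simp
  have fy: "summable (\<lambda>i. \<bar>y i\<bar> powr p) \<and> (\<Sum>i. \<bar>y i\<bar> powr p) = 1"
    using fin2[of "\<lambda>i. \<bar>y i\<bar> powr p"] p0 c0 cp unfolding y_def by simp
  have fp: "(\<Sum>i. \<bar>x i + y i\<bar> powr p) = (2*c) powr p"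
    using fin2[of "\<lambda>i. \<bar>x i + y i\<bar> powr p"] p0 c0 unfolding x_def y_def by simp
  have fm: "(\<Sum>i. \<bar>x i - y i\<bar> powr p) = (2*c) powr p"
    using fin2[of "\<lambda>i. \<bar>x i - y i\<bar> powr p"] p0 c0 unfolding x_def y_def by simp
  define q where "q = 2 * c"
  have q0: "q > 0" unfolding q_def using c0 by simp
  have qq: "(q powr p) powr (1/p) = q" using q0 p by (simp add: powr_powr)
  have q2: "q\<^sup>2 = 2 powr (2 - 2/p)"
  proof -
    have "q\<^sup>2 = 2 powr 1 * 2 powr (- 1/p) * (2 powr 1 * 2 powr (- 1/p))"
      unfolding q_def c_def by (simp add: power2_eq_square)
    also have "\<dots> = 2 powr (2 - 2/p)" by (simp add: powr_add[symmetric]) (simp add: powr_diff powr_minus_divide)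
    finally show ?thesis .
  qed
  have mem: "(q\<^sup>2 + q\<^sup>2 - 4) / (2 * q * q) \<in> SPset p"
  proof -
    have "x 1 \<noteq> y 1" unfolding x_def y_def using c0 by simp
    then have "x \<noteq> y" by metis
    moreover have "x 0 \<noteq> - y 0" unfolding x_def y_def using c0 by simp
    then have "x \<noteq> (\<lambda>i. - y i)" by metis
    moreover have "lp_norm p x = 1" "lp_norm p y = 1" using fx fy unfolding lp_norm_def by auto
    moreover have "x \<in> lp_space p" "y \<in> lp_space p" using fx fy unfolding lp_space_def by auto
    moreover have "lp_norm p (\<lambda>i. x i + y i) = q" "lp_norm p (\<lambda>i. x i - y i) = q"
      unfolding lp_norm_def fp fm q_def[symmetric] qq by auto
    ultimately show ?thesis unfolding SPset_def
      by (intro CollectI exI[of _ x] exI[of _ y]) simp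
  qed
  have "1 - 2 powr (1 - (2 - 2/p)) = 1 - 2 powr (2/p - 1)" by (simp add: algebra_simps)
  then show ?thesis using le_SP[OF p mem] val_eq[OF q0 q2] by simp
qed

theorem mainTheorem2:
  fixes p :: real
  assumes "1 \<le> p"
  shows "1 - 2 powr (- \<bar>2 / p - 1\<bar>) \<le> SP_lp p"
proof (cases "2/p - 1 \<ge> 0")
  case True
  then have "- \<bar>2 / p - 1\<bar> = 1 - 2/p" by simp
  then show ?thesis using case1[OF assms] by simp
next
  case False
  then have "- \<bar>2 / p - 1\<bar> = 2/p - 1" by simp
  then show ?thesis using case2[OF assms] by simp
qed

end
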